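(* Let $n\ge1$ and $K=\ker(f_{\Delta_n}\circ f_{\Delta_n^*}^* )=\ker(f_{\Delta_n^*}\circ f_{\Delta_n}^* )\cong(\mathbb{Z}/(n+1))^n\subset\mathbb{T}^n$. Then the inclusion $f_{\Delta_n^*}^*(\mathbb{T}^n)\hookrightarrow\mathbb{T}^{n+1}$ induces a group isomorphism $f_{\Delta_n^*}^*(\mathbb{T}^n)/D_{\Delta_n}\cong \mathbb{T}^{n+1}/N_{\Delta_n}$, and $f_{\Delta_n^*}^*$ induces a group isomorphism $\mathbb{T}^n/K\cong f_{\Delta_n^*}^*(\mathbb{T}^n)/D_{\Delta_n}$. Symmetrically, the inclusion induces $f_{\Delta_n}^*(\mathbb{T}^n)/D_{\Delta_n^*}\cong\mathbb{T}^{n+1}/N_{\Delta_n^*}$ and $f_{\Delta_n}^*$ induces $\mathbb{T}^n/K\cong f_{\Delta_n}^*(\mathbb{T}^n)/D_{\Delta_n^*}$. In particular $D_{\Delta_n}$ and $D_{\Delta_n^*}$ are finite.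
   Context: Let $e_1,\dots,e_n$ be the standard basis of $\mathbb{R}^n$ and $\mathbf{1}=(1,\dots,1)\in\mathbb{R}^n$. Put $u_i=e_i$ for $1\le i\le n$, $u_{n+1}=-\mathbf{1}$, and $v_i=(n+1)e_i-\mathbf{1}$ for $1\le i\le n$, $v_{n+1}=-\mathbf{1}$. Define linear maps $F_{\Delta_n},F_{\Delta_n^*}:\mathbb{R}^{n+1}\to\mathbb{R}^n$ by $F_{\Delta_n}(x)=\sum_{i=1}^{n+1}x_iu_i$ and $F_{\Delta_n^*}(x)=\sum_{i=1}^{n+1}x_iv_i$, and their transposes $F_{\Delta_n}^*(y)=(u_1\cdot y,\dots,u_{n+1}\cdot y)$, $F_{\Delta_n^*}^*(y)=(v_1\cdot y,\dots,v_{n+1}\cdot y)$. Write $\mathbb{T}^k=\mathbb{R}^k/\mathbb{Z}^k$. These integer matrices induce group homomorphisms $f_{\Delta_n},f_{\Delta_n^*}:\mathbb{T}^{n+1}\to\mathbb{T}^n$ and $f_{\Delta_n}^*,f_{\Delta_n^*}^*:\mathbb{T}^n\to\mathbb{T}^{n+1}$. Let $N_{\Delta_n}=\ker f_{\Delta_n}$, $N_{\Delta_n^*}=\ker f_{\Delta_n^*}$, $D_{\Delta_n}=N_{\Delta_n}\cap f_{\Delta_n^*}^*(\mathbb{T}^n)$ and $D_{\Delta_n^*}=N_{\Delta_n^*}\cap f_{\Delta_n}^*(\mathbb{T}^n)$. *)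

theory Defs
  imports "HOL-Analysis.Analysis" "HOL-Algebra.Algebra"
begin

(* Conventions: a point of R^k is a function nat => real vanishing outside {0..<k};
   the paper's indices 1..k are shifted to 0..k-1.  In particular the paper's
   u_{n+1}, v_{n+1} are u n n, v n n here. *)

(* The torus T^k = R^k / Z^k, elements represented by their unique
   representative in [0,1)^k, with componentwise addition mod 1. *)
definition torus :: "nat \<Rightarrow> (nat \<Rightarrow> real) monoid" where
  "torus k = \<lparr> carrier = {x. (\<forall>i<k. 0 \<le> x i \<and> x i < 1) \<and> (\<forall>i\<ge>k. x i = 0)},
               monoid.mult = (\<lambda>x y. \<lambda>i. frac (x i + y i)),
               one = (\<lambda>_. 0) \<rparr>"

definition e_vec :: "nat \<Rightarrow> nat \<Rightarrow> (nat \<Rightarrow> real)" where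
  "e_vec n i = (\<lambda>j. if j < n \<and> j = i then 1 else 0)"

definition one_vec :: "nat \<Rightarrow> (nat \<Rightarrow> real)" where
  "one_vec n = (\<lambda>j. if j < n then 1 else 0)"

definition u_vec :: "nat \<Rightarrow> nat \<Rightarrow> (nat \<Rightarrow> real)" where
  "u_vec n i = (if i < n then e_vec n i else (\<lambda>j. - one_vec n j))"

definition v_vec :: "nat \<Rightarrow> nat \<Rightarrow> (nat \<Rightarrow> real)" where
  "v_vec n i = (if i < n then (\<lambda>j. real (n+1) * e_vec n i j - one_vec n j)
                else (\<lambda>j. - one_vec n j))"

definition dotn :: "nat \<Rightarrow> (nat \<Rightarrow> real) \<Rightarrow> (nat \<Rightarrow> real) \<Rightarrow> real" where
  "dotn n a b = (\<Sum>j<n. a j * b j)"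

definition Fmap :: "(nat \<Rightarrow> nat \<Rightarrow> (nat \<Rightarrow> real)) \<Rightarrow> nat \<Rightarrow> (nat \<Rightarrow> real) \<Rightarrow> (nat \<Rightarrow> real)" where
  "Fmap w n x = (\<lambda>j. \<Sum>i\<le>n. x i * w n i j)"

definition FmapT :: "(nat \<Rightarrow> nat \<Rightarrow> (nat \<Rightarrow> real)) \<Rightarrow> nat \<Rightarrow> (nat \<Rightarrow> real) \<Rightarrow> (nat \<Rightarrow> real)" where
  "FmapT w n y = (\<lambda>i. if i \<le> n then dotn n (w n i) y else 0)"

(* induced map on tori (integer matrices): apply to representative, reduce mod 1 *)
definition tor :: "((nat \<Rightarrow> real) \<Rightarrow> (nat \<Rightarrow> real)) \<Rightarrow> (nat \<Rightarrow> real) \<Rightarrow> (nat \<Rightarrow> real)" where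
  "tor F x = (\<lambda>j. frac (F x j))"

definition f_D :: "nat \<Rightarrow> (nat \<Rightarrow> real) \<Rightarrow> (nat \<Rightarrow> real)" where
  "f_D n = tor (Fmap u_vec n)"
definition f_Ds :: "nat \<Rightarrow> (nat \<Rightarrow> real) \<Rightarrow> (nat \<Rightarrow> real)" where
  "f_Ds n = tor (Fmap v_vec n)"
definition fT_D :: "nat \<Rightarrow> (nat \<Rightarrow> real) \<Rightarrow> (nat \<Rightarrow> real)" where
  "fT_D n = tor (FmapT u_vec n)"
definition fT_Ds :: "nat \<Rightarrow> (nat \<Rightarrow> real) \<Rightarrow> (nat \<Rightarrow> real)" where
  "fT_Ds n = tor (FmapT v_vec n)"

definition N_D :: "nat \<Rightarrow> (nat \<Rightarrow> real) set" where
  "N_D n = kernel (torus (n+1)) (torus n) (f_D n)"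
definition N_Ds :: "nat \<Rightarrow> (nat \<Rightarrow> real) set" where
  "N_Ds n = kernel (torus (n+1)) (torus n) (f_Ds n)"
definition D_D :: "nat \<Rightarrow> (nat \<Rightarrow> real) set" where
  "D_D n = N_D n \<inter> fT_Ds n ` carrier (torus n)"
definition D_Ds :: "nat \<Rightarrow> (nat \<Rightarrow> real) set" where
  "D_Ds n = N_Ds n \<inter> fT_D n ` carrier (torus n)"

definition K_set :: "nat \<Rightarrow> (nat \<Rightarrow> real) set" where
  "K_set n = kernel (torus n) (torus n) (f_D n \<circ> fT_Ds n)"

end

theory Submission
  imports Defs
begin

lemma frac_cong: "a - b \<in> \<int> \<Longrightarrow> frac a = frac b"
proof -
  assume "a - b \<in> \<int>"
  then obtain k where k: "a = b + of_int k" by (metis Ints_cases add.commute diff_add_cancel)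
  show ?thesis unfolding k by (simp add: frac_def)
qed

lemma frac_minus_Ints: "frac a - a \<in> \<int>"
  by (simp add: frac_def)

lemma ints_trans: "(a::real) - b \<in> \<int> \<Longrightarrow> b - c \<in> \<int> \<Longrightarrow> a - c \<in> \<int>"
  by (metis Ints_add diff_add_cancel add_diff_eq)

lemma torus_mem_frac: "x \<in> carrier (torus k) \<Longrightarrow> frac (x i) = x i"
  by (cases "i < k") (auto simp: torus_def frac_eq)

lemma torus_mult: "monoid.mult (torus k) x y = (\<lambda>i. frac (x i + y i))"
  by (simp add: torus_def)

lemma torus_one: "one (torus k) = (\<lambda>_. 0)"
  by (simp add: torus_def)

lemma torus_l_one: assumes xin: "x \<in> carrier (torus k)" shows "\<one>\<^bsub>torus k\<^esub> \<otimes>\<^bsub>torus k\<^esub> x = x"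
proof -
  have fx: "frac (x i) = x i" for i using torus_mem_frac[OF xin] .
  show ?thesis
    apply (simp only: torus_mult torus_one)
    apply (simp only: add_0_left fx)
    done
qed

lemma torus_closed: "x \<in> carrier (torus k) \<Longrightarrow> y \<in> carrier (torus k) \<Longrightarrow> x \<otimes>\<^bsub>torus k\<^esub> y \<in> carrier (torus k)"
  by (auto simp: torus_def frac_lt_1)

lemma torus_one_closed: "\<one>\<^bsub>torus k\<^esub> \<in> carrier (torus k)"
  by (simp add: torus_def)

lemma torus_assoc: "x \<otimes>\<^bsub>torus k\<^esub> y \<otimes>\<^bsub>torus k\<^esub> z = x \<otimes>\<^bsub>torus k\<^esub> (y \<otimes>\<^bsub>torus k\<^esub> z)"
proof -
  have "frac (frac (x i + y i) + z i) = frac (x i + frac (y i + z i))" for i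
  proof (rule frac_cong)
    have "frac (x i + y i) - (x i + y i) \<in> \<int>" "frac (y i + z i) - (y i + z i) \<in> \<int>"
      by (rule frac_minus_Ints)+
    then have "(frac (x i + y i) - (x i + y i)) - (frac (y i + z i) - (y i + z i)) \<in> \<int>"
      by (rule Ints_diff)
    then show "frac (x i + y i) + z i - (x i + frac (y i + z i)) \<in> \<int>"
      by (simp add: algebra_simps)
  qed
  then show ?thesis by (simp add: torus_mult)
qed

lemma torus_comm: "x \<otimes>\<^bsub>torus k\<^esub> y = y \<otimes>\<^bsub>torus k\<^esub> x"
  by (simp add: torus_mult add.commute)

lemma torus_inv_ex: assumes x: "x \<in> carrier (torus k)"
  shows "\<exists>y\<in>carrier (torus k). y \<otimes>\<^bsub>torus k\<^esub> x = \<one>\<^bsub>torus k\<^esub>"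
proof (intro bexI)
  have "frac (frac (- x i) + x i) = frac 0" for i
  proof (rule frac_cong)
    have "frac (- x i) - (- x i) \<in> \<int>" by (rule frac_minus_Ints)
    then show "frac (- x i) + x i - 0 \<in> \<int>" by simp
  qed
  then show "(\<lambda>i. frac (- x i)) \<otimes>\<^bsub>torus k\<^esub> x = \<one>\<^bsub>torus k\<^esub>"
    by (simp add: torus_mult torus_one)
  show "(\<lambda>i. frac (- x i)) \<in> carrier (torus k)"
    using x by (auto simp: torus_def frac_lt_1)
qed

lemma torus_comm_group: "comm_group (torus k)"
  apply (rule comm_groupI)
  apply (erule (1) torus_closed)
  apply (rule torus_one_closed)
  apply (rule torus_assoc)
  apply (rule torus_comm)
  apply (erule torus_l_one)
  apply (erule torus_inv_ex)
  done

lemma Fmap_u: "Fmap u_vec n x j = (if j < n then x j - x n else 0)"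
  by (simp add: Fmap_def u_vec_def e_vec_def one_vec_def lessThan_Suc_atMost[symmetric] if_distrib cong: if_cong)

lemma sum_e_vec: "j < n \<Longrightarrow> (\<Sum>i<n. x i * e_vec n i j) = x j"
  by (simp add: e_vec_def if_distrib cong: if_cong)

lemma Fmap_v: "Fmap v_vec n x j = (if j < n then real (n+1) * x j - (\<Sum>i<n. x i) - x n else 0)"
proof (cases "j < n")
  case True
  have "Fmap v_vec n x j = (\<Sum>i<n. x i * (real (n+1) * e_vec n i j - 1)) - x n"
    using True by (simp add: Fmap_def v_vec_def one_vec_def lessThan_Suc_atMost[symmetric])
  also have "(\<Sum>i<n. x i * (real (n+1) * e_vec n i j - 1)) = real (n+1) * (\<Sum>i<n. x i * e_vec n i j) - (\<Sum>i<n. x i)"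
    by (simp add: algebra_simps sum_subtractf sum_distrib_left)
  finally show ?thesis using True sum_e_vec[OF True, of x] by simp
next
  case False
  then show ?thesis by (auto simp: Fmap_def v_vec_def e_vec_def one_vec_def intro!: sum.neutral)
qed

lemma sum_e_vec2: "i < n \<Longrightarrow> (\<Sum>j<n. e_vec n i j * y j) = y i"
proof -
  assume i: "i < n"
  have "(\<Sum>j<n. e_vec n i j * y j) = (\<Sum>j<n. if i = j then y j else 0)"
    by (rule sum.cong) (auto simp: e_vec_def)
  also have "\<dots> = y i" using i by simp
  finally show ?thesis .
qed

lemma sum_one_vec: "(\<Sum>j<n. one_vec n j * y j) = (\<Sum>j<n. y j)"
  by (rule sum.cong) (auto simp: one_vec_def)

lemma dotn_u_lt: "i < n \<Longrightarrow> dotn n (u_vec n i) y = y i"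
  by (simp add: dotn_def u_vec_def sum_e_vec2)

lemma dotn_u_n: "dotn n (u_vec n n) y = - (\<Sum>j<n. y j)"
proof -
  have "dotn n (u_vec n n) y = (\<Sum>j<n. - (one_vec n j * y j))"
    by (simp add: dotn_def u_vec_def)
  also have "\<dots> = - (\<Sum>j<n. y j)" by (simp only: sum_negf sum_one_vec)
  finally show ?thesis .
qed

lemma dotn_v_lt: "i < n \<Longrightarrow> dotn n (v_vec n i) y = real (n+1) * y i - (\<Sum>j<n. y j)"
proof -
  assume i: "i < n"
  have "dotn n (v_vec n i) y = (\<Sum>j<n. real (n+1) * (e_vec n i j * y j) - one_vec n j * y j)"
    using i by (simp add: dotn_def v_vec_def algebra_simps)
  also have "\<dots> = real (n+1) * (\<Sum>j<n. e_vec n i j * y j) - (\<Sum>j<n. one_vec n j * y j)"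
    by (simp only: sum_subtractf sum_distrib_left)
  also have "\<dots> = real (n+1) * y i - (\<Sum>j<n. y j)" by (simp only: sum_e_vec2[OF i] sum_one_vec)
  finally show ?thesis .
qed

lemma dotn_v_n: "dotn n (v_vec n n) y = - (\<Sum>j<n. y j)"
proof -
  have "dotn n (v_vec n n) y = (\<Sum>j<n. - (one_vec n j * y j))"
    by (simp add: dotn_def v_vec_def)
  also have "\<dots> = - (\<Sum>j<n. y j)" by (simp only: sum_negf sum_one_vec)
  finally show ?thesis .
qed

lemma FmapT_u: "FmapT u_vec n y i = (if i < n then y i else if i = n then - (\<Sum>j<n. y j) else 0)"
  by (cases "i < n"; cases "i = n") (simp_all add: FmapT_def dotn_u_lt dotn_u_n)

lemma FmapT_v: "FmapT v_vec n y i = (if i < n then real (n+1) * y i - (\<Sum>j<n. y j) else if i = n then - (\<Sum>j<n. y j) else 0)"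
  by (cases "i < n"; cases "i = n") (simp_all add: FmapT_def dotn_v_lt dotn_v_n)

lemma Fmap_lin: "Fmap w n (\<lambda>i. x i + y i) j = Fmap w n x j + Fmap w n y j"
  by (simp add: Fmap_def algebra_simps sum.distrib)

lemma FmapT_lin: "FmapT w n (\<lambda>i. x i + y i) j = FmapT w n x j + FmapT w n y j"
  by (simp add: FmapT_def dotn_def algebra_simps sum.distrib)

lemma Fmap_cong:
  assumes "\<And>i j. w n i j \<in> \<int>" "\<And>i. a i - b i \<in> \<int>"
  shows "Fmap w n a j - Fmap w n b j \<in> \<int>"
proof -
  have "Fmap w n a j - Fmap w n b j = (\<Sum>i\<le>n. (a i - b i) * w n i j)"
    by (simp add: Fmap_def sum_subtractf algebra_simps)
  also have "\<dots> \<in> \<int>" using assms by (intro Ints_sum Ints_mult) auto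
  finally show ?thesis .
qed

lemma FmapT_cong:
  assumes "\<And>i j. w n i j \<in> \<int>" "\<And>i. a i - b i \<in> \<int>"
  shows "FmapT w n a i - FmapT w n b i \<in> \<int>"
proof -
  have "FmapT w n a i - FmapT w n b i = (if i \<le> n then (\<Sum>j<n. w n i j * (a j - b j)) else 0)"
    by (simp add: FmapT_def dotn_def sum_subtractf algebra_simps)
  also have "\<dots> \<in> \<int>" using assms by (auto intro!: Ints_sum Ints_mult)
  finally show ?thesis .
qed

lemma u_int: "u_vec n i j \<in> \<int>"
  by (simp add: u_vec_def e_vec_def one_vec_def)

lemma v_int: "v_vec n i j \<in> \<int>"
  by (auto simp: v_vec_def e_vec_def one_vec_def intro!: Ints_diff Ints_mult)

lemma tor_hom:
  assumes lin: "\<And>x y j. F (\<lambda>i. x i + y i) j = F x j + F y j"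
    and cong: "\<And>a b j. (\<And>i. a i - b i \<in> \<int>) \<Longrightarrow> F a j - F b j \<in> \<int>"
    and sup: "\<And>x j. j \<ge> m \<Longrightarrow> F x j = 0"
  shows "tor F \<in> hom (torus k) (torus m)"
proof (rule homI)
  fix x assume "x \<in> carrier (torus k)"
  show "tor F x \<in> carrier (torus m)" by (auto simp: tor_def torus_def frac_lt_1 sup)
next
  fix x y assume "x \<in> carrier (torus k)" "y \<in> carrier (torus k)"
  have "frac (F (\<lambda>i. frac (x i + y i)) j) = frac (frac (F x j) + frac (F y j))" for j
  proof (rule frac_cong)
    have 1: "F (\<lambda>i. frac (x i + y i)) j - F (\<lambda>i. x i + y i) j \<in> \<int>"
      by (rule cong) (rule frac_minus_Ints)
    have 2: "frac (F x j) - F x j \<in> \<int>" "frac (F y j) - F y j \<in> \<int>" by (rule frac_minus_Ints)+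
    have "F (\<lambda>i. frac (x i + y i)) j - (frac (F x j) + frac (F y j)) =
      (F (\<lambda>i. frac (x i + y i)) j - F (\<lambda>i. x i + y i) j) - (frac (F x j) - F x j) - (frac (F y j) - F y j)"
      by (simp add: lin)
    then show "F (\<lambda>i. frac (x i + y i)) j - (frac (F x j) + frac (F y j)) \<in> \<int>"
      using 1 2 by (metis Ints_diff)
  qed
  then show "tor F (x \<otimes>\<^bsub>torus k\<^esub> y) = tor F x \<otimes>\<^bsub>torus m\<^esub> tor F y"
    by (simp add: tor_def torus_def)
qed

lemma f_D_hom: "f_D n \<in> hom (torus (n+1)) (torus n)"
  unfolding f_D_def
proof (rule tor_hom)
  fix a b :: "nat \<Rightarrow> real" and j assume "\<And>i. a i - b i \<in> \<int>"
  then show "Fmap u_vec n a j - Fmap u_vec n b j \<in> \<int>" by (rule Fmap_cong[where w=u_vec, OF u_int])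
qed (simp_all add: Fmap_lin Fmap_u)

lemma f_Ds_hom: "f_Ds n \<in> hom (torus (n+1)) (torus n)"
  unfolding f_Ds_def
proof (rule tor_hom)
  fix a b :: "nat \<Rightarrow> real" and j assume "\<And>i. a i - b i \<in> \<int>"
  then show "Fmap v_vec n a j - Fmap v_vec n b j \<in> \<int>" by (rule Fmap_cong[where w=v_vec, OF v_int])
qed (simp_all add: Fmap_lin Fmap_v)

lemma fT_D_hom: "fT_D n \<in> hom (torus n) (torus (n+1))"
  unfolding fT_D_def
proof (rule tor_hom)
  fix a b :: "nat \<Rightarrow> real" and j assume "\<And>i. a i - b i \<in> \<int>"
  then show "FmapT u_vec n a j - FmapT u_vec n b j \<in> \<int>" by (rule FmapT_cong[where w=u_vec, OF u_int])
qed (simp add: FmapT_lin, simp add: FmapT_def)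

lemma fT_Ds_hom: "fT_Ds n \<in> hom (torus n) (torus (n+1))"
  unfolding fT_Ds_def
proof (rule tor_hom)
  fix a b :: "nat \<Rightarrow> real" and j assume "\<And>i. a i - b i \<in> \<int>"
  then show "FmapT v_vec n a j - FmapT v_vec n b j \<in> \<int>" by (rule FmapT_cong[where w=v_vec, OF v_int])
qed (simp add: FmapT_lin, simp add: FmapT_def)

lemma tor_comp:
  assumes "\<And>i j. w n i j \<in> \<int>"
  shows "tor (Fmap w n) (tor G y) = tor (\<lambda>y. Fmap w n (G y)) y"
  unfolding tor_def
proof (rule ext, rule frac_cong)
  fix j
  show "Fmap w n (\<lambda>j. frac (G y j)) j - Fmap w n (G y) j \<in> \<int>"
    using Fmap_cong[where w=w and n=n and a="\<lambda>i. frac (G y i)" and b="G y" and j=j, OF assms frac_minus_Ints] .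
qed

definition mulN :: "nat \<Rightarrow> (nat \<Rightarrow> real) \<Rightarrow> (nat \<Rightarrow> real)" where
  "mulN n = tor (\<lambda>y j. if j < n then real (n+1) * y j else 0)"

lemma comp1_pt: "Fmap u_vec n (FmapT v_vec n y) j = (if j < n then real (n+1) * y j else 0)"
  by (cases "j < n") (simp_all add: Fmap_u FmapT_v)

lemma comp2_pt: "Fmap v_vec n (FmapT u_vec n y) j = (if j < n then real (n+1) * y j else 0)"
proof (cases "j < n")
  case True
  have s: "(\<Sum>i<n. FmapT u_vec n y i) = (\<Sum>i<n. y i)"
    by (rule sum.cong) (simp_all add: FmapT_u)
  show ?thesis using True by (simp add: Fmap_v s FmapT_u)
qed (simp add: Fmap_v)

lemma comp1: "f_D n \<circ> fT_Ds n = mulN n"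
  unfolding comp_def f_D_def fT_Ds_def tor_comp[where w=u_vec, OF u_int] mulN_def
  by (simp add: tor_def fun_eq_iff comp1_pt)

lemma comp2: "f_Ds n \<circ> fT_D n = mulN n"
  unfolding comp_def f_Ds_def fT_D_def tor_comp[where w=v_vec, OF v_int] mulN_def
  by (simp add: tor_def fun_eq_iff comp2_pt)

lemma mulN_hom: "mulN n \<in> hom (torus n) (torus n)"
  unfolding mulN_def
proof (rule tor_hom)
  fix a b :: "nat \<Rightarrow> real" and j assume "\<And>i. a i - b i \<in> \<int>"
  then have "real (n+1) * (a j - b j) \<in> \<int>" by (intro Ints_mult) auto
  then show "(if j < n then real (n + 1) * a j else 0) - (if j < n then real (n + 1) * b j else 0) \<in> \<int>"
    by (simp add: algebra_simps)
qed (simp_all add: algebra_simps)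

lemma mulN_surj: "mulN n ` carrier (torus n) = carrier (torus n)"
proof
  show "mulN n ` carrier (torus n) \<subseteq> carrier (torus n)"
    using mulN_hom by (rule hom_carrier)
next
  show "carrier (torus n) \<subseteq> mulN n ` carrier (torus n)"
  proof
    fix z assume z: "z \<in> carrier (torus n)"
    define y where "y = (\<lambda>j. z j / real (n+1))"
    have "y \<in> carrier (torus n)" using z by (auto simp: torus_def y_def)
    moreover have "mulN n y = z"
    proof
      fix j show "mulN n y j = z j"
        using z torus_mem_frac[OF z, of j] by (auto simp: mulN_def tor_def y_def torus_def)
    qed
    ultimately show "z \<in> mulN n ` carrier (torus n)" by force
  qed
qed

lemma K_iff: "y \<in> K_set n \<longleftrightarrow> y \<in> carrier (torus n) \<and> (\<forall>j<n. real (n+1) * y j \<in> \<int>)"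
  unfolding K_set_def comp1 kernel_def
  by (auto simp: mulN_def tor_def torus_def fun_eq_iff)


lemma ker_coset_image:
  assumes "group_hom G H h" "g \<in> carrier G"
  shows "h ` (kernel G H h #>\<^bsub>G\<^esub> g) = {h g}"
proof -
  interpret group_hom G H h by fact
  show ?thesis
  proof
    show "h ` (kernel G H h #>\<^bsub>G\<^esub> g) \<subseteq> {h g}"
      using assms(2) by (auto simp: kernel_def r_coset_def)
    have "\<one>\<^bsub>G\<^esub> \<otimes>\<^bsub>G\<^esub> g \<in> kernel G H h #>\<^bsub>G\<^esub> g"
      by (auto simp: kernel_def r_coset_def)
    then show "{h g} \<subseteq> h ` (kernel G H h #>\<^bsub>G\<^esub> g)"
      using assms(2) by force
  qed
qed

lemma hom_restrict_dom:
  assumes "h \<in> hom G H" "A \<subseteq> carrier G" shows "h \<in> hom (G\<lparr>carrier := A\<rparr>) H"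
proof (rule homI)
  fix x assume "x \<in> carrier (G\<lparr>carrier := A\<rparr>)"
  then show "h x \<in> carrier H" using assms by (auto intro: hom_in_carrier)
next
  fix x y assume "x \<in> carrier (G\<lparr>carrier := A\<rparr>)" "y \<in> carrier (G\<lparr>carrier := A\<rparr>)"
  then show "h (x \<otimes>\<^bsub>G\<lparr>carrier := A\<rparr>\<^esub> y) = h x \<otimes>\<^bsub>H\<^esub> h y" using assms by (auto intro: hom_mult)
qed

lemma hom_restrict_cod:
  assumes "h \<in> hom G H" "h ` carrier G \<subseteq> A" shows "h \<in> hom G (H\<lparr>carrier := A\<rparr>)"
proof (rule homI)
  fix x assume "x \<in> carrier G"
  then show "h x \<in> carrier (H\<lparr>carrier := A\<rparr>)" using assms by auto
next
  fix x y assume "x \<in> carrier G" "y \<in> carrier G"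
  then show "h (x \<otimes>\<^bsub>G\<^esub> y) = h x \<otimes>\<^bsub>H\<lparr>carrier := A\<rparr>\<^esub> h y" using assms by (auto intro: hom_mult)
qed

lemma abstract_part:
  fixes T1 :: "'a monoid" and Tn :: "'b monoid" and f g
  assumes G1: "comm_group T1" and Gn: "comm_group Tn"
    and fh: "f \<in> hom T1 Tn" and gh: "g \<in> hom Tn T1"
    and surj: "(f \<circ> g) ` carrier Tn = carrier Tn"
  shows "(\<exists>\<phi>. \<phi> \<in> iso (T1\<lparr>carrier := g ` carrier Tn\<rparr> Mod (kernel T1 Tn f \<inter> g ` carrier Tn)) (T1 Mod kernel T1 Tn f)
              \<and> (\<forall>a\<in>g ` carrier Tn. \<phi> ((kernel T1 Tn f \<inter> g ` carrier Tn) #>\<^bsub>T1\<^esub> a) = kernel T1 Tn f #>\<^bsub>T1\<^esub> a)) \<and>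
         (\<exists>\<psi>. \<psi> \<in> iso (Tn Mod kernel Tn Tn (f \<circ> g)) (T1\<lparr>carrier := g ` carrier Tn\<rparr> Mod (kernel T1 Tn f \<inter> g ` carrier Tn))
              \<and> (\<forall>x\<in>carrier Tn. \<psi> (kernel Tn Tn (f \<circ> g) #>\<^bsub>Tn\<^esub> x) = (kernel T1 Tn f \<inter> g ` carrier Tn) #>\<^bsub>T1\<^esub> g x)) \<and>
         kernel T1 Tn f \<inter> g ` carrier Tn \<subseteq> g ` kernel Tn Tn (f \<circ> g)"
proof -
  define N where "N = kernel T1 Tn f"
  define A where "A = g ` carrier Tn"
  define D where "D = N \<inter> A"
  define K where "K = kernel Tn Tn (f \<circ> g)"
  interpret T1: comm_group T1 by fact
  interpret Tn: comm_group Tn by fact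
  interpret fg: group_hom T1 Tn f by unfold_locales (rule fh)
  interpret gg: group_hom Tn T1 g by unfold_locales (rule gh)
  have subA: "subgroup A T1" unfolding A_def by (rule gg.img_is_subgroup)
  have AT1: "A \<subseteq> carrier T1" using subA by (rule subgroup.subset)
  have subN: "subgroup N T1" unfolding N_def by (rule fg.subgroup_kernel)
  have normN: "N \<lhd> T1" unfolding N_def by (rule fg.normal_kernel)
  define G where "G = T1\<lparr>carrier := A\<rparr>"
  have grpG: "group G" unfolding G_def by (rule subgroup.subgroup_is_group[OF subA T1.is_group])
  have rcosG: "r_coset G = r_coset T1" unfolding G_def by (simp add: r_coset_def fun_eq_iff)
  interpret Q: group "T1 Mod N" by (rule normal.factorgroup_is_group[OF normN])
  define h where "h = (\<lambda>a. N #>\<^bsub>T1\<^esub> a)"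
  have hT1: "h \<in> hom T1 (T1 Mod N)" unfolding h_def by (rule normal.r_coset_hom_Mod[OF normN])
  have hG: "h \<in> hom G (T1 Mod N)" unfolding G_def by (rule hom_restrict_dom[OF hT1 AT1])
  have hgh: "group_hom G (T1 Mod N) h"
    by (rule group_hom.intro[OF grpG Q.is_group]) (simp add: group_hom_axioms_def hG)
  interpret hg: group_hom G "T1 Mod N" h by (rule hgh)
  have kerD: "kernel G (T1 Mod N) h = D"
  proof -
    have "a \<in> A \<Longrightarrow> (N #>\<^bsub>T1\<^esub> a = N) = (a \<in> N)" for a
      using T1.coset_join1[of N a] T1.coset_join2[of a N] subN AT1 by blast
    then show ?thesis unfolding kernel_def D_def h_def G_def by (auto simp: FactGroup_def)
  qed
  have surjh: "h ` carrier G = carrier (T1 Mod N)"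
  proof
    show "h ` carrier G \<subseteq> carrier (T1 Mod N)" using hG by (rule hom_carrier)
    show "carrier (T1 Mod N) \<subseteq> h ` carrier G"
    proof
      fix XX assume "XX \<in> carrier (T1 Mod N)"
      then obtain x where x: "x \<in> carrier T1" and XX: "XX = N #>\<^bsub>T1\<^esub> x"
        by (auto simp: FactGroup_def RCOSETS_def)
      have "f x \<in> (f \<circ> g) ` carrier Tn" using surj x by simp
      then obtain y where y: "y \<in> carrier Tn" and fy: "f (g y) = f x" by auto
      have gy: "g y \<in> carrier T1" using y by simp
      have "f (g y \<otimes>\<^bsub>T1\<^esub> inv\<^bsub>T1\<^esub> x) = \<one>\<^bsub>Tn\<^esub>"
        using x gy fy by simp
      then have "g y \<otimes>\<^bsub>T1\<^esub> inv\<^bsub>T1\<^esub> x \<in> N" using x gy by (simp add: N_def kernel_def)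
      then have "g y \<in> N #>\<^bsub>T1\<^esub> x"
        by (rule subgroup.rcos_module_rev[OF subN T1.is_group x gy])
      then have "N #>\<^bsub>T1\<^esub> x = N #>\<^bsub>T1\<^esub> g y"
        by (rule T1.repr_independence[OF _ x subN])
      then show "XX \<in> h ` carrier G"
        using XX y unfolding h_def G_def A_def by auto
    qed
  qed
  have iso1: "(\<lambda>XX. the_elem (h ` XX)) \<in> iso (G Mod D) (T1 Mod N)"
    using hg.FactGroup_iso_set[OF surjh] kerD by simp
  have P1: "\<forall>a\<in>A. (\<lambda>XX. the_elem (h ` XX)) (D #>\<^bsub>T1\<^esub> a) = N #>\<^bsub>T1\<^esub> a"
  proof
    fix a assume a: "a \<in> A"
    have "h ` (kernel G (T1 Mod N) h #>\<^bsub>G\<^esub> a) = {h a}"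
      by (rule ker_coset_image[OF hgh]) (simp add: G_def a)
    then have "h ` (D #>\<^bsub>T1\<^esub> a) = {h a}" by (simp only: kerD rcosG)
    then show "(\<lambda>XX. the_elem (h ` XX)) (D #>\<^bsub>T1\<^esub> a) = N #>\<^bsub>T1\<^esub> a"
      by (simp add: h_def)
  qed
  have normD: "D \<lhd> G" using hg.normal_kernel kerD by simp
  have subD: "subgroup D G" using hg.subgroup_kernel kerD by simp
  interpret Q2: group "G Mod D" by (rule normal.factorgroup_is_group[OF normD])
  interpret Gg: group G by (rule grpG)
  define p where "p = (\<lambda>x. D #>\<^bsub>G\<^esub> g x)"
  have gG: "g \<in> hom Tn G" unfolding G_def A_def by (rule hom_restrict_cod[OF gh]) simp
  have rG: "(\<lambda>a. D #>\<^bsub>G\<^esub> a) \<in> hom G (G Mod D)" by (rule normal.r_coset_hom_Mod[OF normD])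
  have pH: "p \<in> hom Tn (G Mod D)"
  proof (rule homI)
    fix x assume "x \<in> carrier Tn"
    then show "p x \<in> carrier (G Mod D)" unfolding p_def
      using hom_in_carrier[OF gG] hom_in_carrier[OF rG] by blast
  next
    fix x y assume x: "x \<in> carrier Tn" and y: "y \<in> carrier Tn"
    show "p (x \<otimes>\<^bsub>Tn\<^esub> y) = p x \<otimes>\<^bsub>G Mod D\<^esub> p y"
      unfolding p_def hom_mult[OF gG x y]
      by (rule hom_mult[OF rG]) (use x y hom_in_carrier[OF gG] in auto)
  qed
  have pgh: "group_hom Tn (G Mod D) p"
    by (rule group_hom.intro[OF Tn.is_group Q2.is_group]) (simp add: group_hom_axioms_def pH)
  interpret pg: group_hom Tn "G Mod D" p by (rule pgh)
  have surjp: "p ` carrier Tn = carrier (G Mod D)"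
  proof
    show "p ` carrier Tn \<subseteq> carrier (G Mod D)" using pH by (rule hom_carrier)
    show "carrier (G Mod D) \<subseteq> p ` carrier Tn"
    proof
      fix XX assume "XX \<in> carrier (G Mod D)"
      then obtain a where a: "a \<in> A" and XX: "XX = D #>\<^bsub>G\<^esub> a"
        by (auto simp: FactGroup_def RCOSETS_def G_def)
      then obtain y where "y \<in> carrier Tn" "a = g y" by (auto simp: A_def)
      then show "XX \<in> p ` carrier Tn" using XX by (auto simp: p_def)
    qed
  qed
  have kerK: "kernel Tn (G Mod D) p = K"
  proof -
    have "x \<in> carrier Tn \<Longrightarrow> (D #>\<^bsub>G\<^esub> g x = D) = (f (g x) = \<one>\<^bsub>Tn\<^esub>)" for x
    proof -
      assume x: "x \<in> carrier Tn"
      have gxG: "g x \<in> carrier G" using x by (simp add: G_def A_def)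
      have "(D #>\<^bsub>G\<^esub> g x = D) = (g x \<in> D)"
        using group.coset_join1[OF grpG, of D "g x"] group.coset_join2[OF grpG, of "g x" D] subD gxG by blast
      also have "\<dots> = (f (g x) = \<one>\<^bsub>Tn\<^esub>)"
        using x by (auto simp: D_def N_def A_def kernel_def)
      finally show ?thesis .
    qed
    then show ?thesis unfolding kernel_def K_def p_def by (auto simp: FactGroup_def)
  qed
  have iso2: "(\<lambda>XX. the_elem (p ` XX)) \<in> iso (Tn Mod K) (G Mod D)"
    using pg.FactGroup_iso_set[OF surjp] kerK by simp
  have P2: "\<forall>x\<in>carrier Tn. (\<lambda>XX. the_elem (p ` XX)) (K #>\<^bsub>Tn\<^esub> x) = D #>\<^bsub>T1\<^esub> g x"
  proof
    fix x assume x: "x \<in> carrier Tn"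
    have "p ` (kernel Tn (G Mod D) p #>\<^bsub>Tn\<^esub> x) = {p x}"
      by (rule ker_coset_image[OF pgh x])
    then have "p ` (K #>\<^bsub>Tn\<^esub> x) = {p x}" by (simp only: kerK)
    then show "(\<lambda>XX. the_elem (p ` XX)) (K #>\<^bsub>Tn\<^esub> x) = D #>\<^bsub>T1\<^esub> g x"
      by (simp add: p_def rcosG)
  qed
  have P3: "D \<subseteq> g ` K"
  proof
    fix d assume "d \<in> D"
    then obtain y where y: "y \<in> carrier Tn" "d = g y" "f (g y) = \<one>\<^bsub>Tn\<^esub>"
      by (auto simp: D_def N_def A_def kernel_def)
    then have "y \<in> K" by (simp add: K_def kernel_def)
    then show "d \<in> g ` K" using y by blast
  qed
  show ?thesis
    using iso1 P1 iso2 P2 P3 unfolding G_def D_def N_def A_def K_def by blast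
qed


definition hK :: "nat \<Rightarrow> (nat \<Rightarrow> int) \<Rightarrow> (nat \<Rightarrow> real)" where
  "hK n c = (\<lambda>j. if j < n then real_of_int (c j) / real (n+1) else 0)"

lemma frac_div_int:
  assumes m: "m > 0"
  shows "frac (real_of_int c / real m) = real_of_int (c mod int m) / real m"
proof -
  have "real_of_int c = real_of_int (c div int m) * real m + real_of_int (c mod int m)"
    by (metis of_int_add of_int_mult of_int_of_nat_eq div_mult_mod_eq)
  then have e: "real_of_int c / real m = real_of_int (c div int m) + real_of_int (c mod int m) / real m"
    using m by (simp add: field_simps)
  have "frac (real_of_int c / real m) = frac (real_of_int (c mod int m) / real m)"
    by (rule frac_cong) (simp add: e)
  also have "\<dots> = real_of_int (c mod int m) / real m"
  proof -
    have "0 \<le> c mod int m" "c mod int m < int m" using m by simp_all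
    then have "0 \<le> real_of_int (c mod int m)" "real_of_int (c mod int m) < real m"
      by linarith+
    then show ?thesis using m by (simp add: frac_eq divide_less_eq)
  qed
  finally show ?thesis .
qed

lemma K_iso: "hK n \<in> iso (product_group {..<n} (\<lambda>_. integer_mod_group (n+1))) ((torus n)\<lparr>carrier := K_set n\<rparr>)"
proof -
  let ?P = "product_group {..<n} (\<lambda>_. integer_mod_group (n+1))"
  have carP: "carrier ?P = (\<Pi>\<^sub>E i\<in>{..<n}. {0..<int (n+1)})"
    by (simp add: carrier_integer_mod_group)
  have mem: "hK n c \<in> K_set n" if c: "c \<in> carrier ?P" for c
  proof -
    have cj: "0 \<le> c j \<and> c j < int (n+1)" if "j < n" for j using c that carP by auto
    have cr: "0 \<le> real_of_int (c j) \<and> real_of_int (c j) < real (n+1)" if "j < n" for j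
    proof -
      have "real_of_int (c j) < real_of_int (int (n+1))" using cj[OF that] of_int_less_iff by blast
      moreover have "0 \<le> real_of_int (c j)" using cj[OF that] by simp
      ultimately show ?thesis by simp
    qed
    have "hK n c \<in> carrier (torus n)"
      using cr by (auto simp: torus_def hK_def divide_less_eq)
    moreover have "real (n+1) * hK n c j \<in> \<int>" if "j < n" for j
      using that by (simp add: hK_def)
    ultimately show ?thesis by (simp add: K_iff)
  qed
  have hom: "hK n \<in> hom ?P ((torus n)\<lparr>carrier := K_set n\<rparr>)"
  proof (rule homI)
    fix c assume "c \<in> carrier ?P" then show "hK n c \<in> carrier ((torus n)\<lparr>carrier := K_set n\<rparr>)"
      using mem by simp
  next
    fix c d assume c: "c \<in> carrier ?P" and d: "d \<in> carrier ?P"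
    have "hK n (\<lambda>i\<in>{..<n}. (c i + d i) mod int (n+1)) j = frac (hK n c j + hK n d j)" for j
    proof (cases "j < n")
      case True
      have "frac (hK n c j + hK n d j) = frac (real_of_int (c j + d j) / real (n+1))"
        using True by (simp add: hK_def add_divide_distrib)
      also have "\<dots> = real_of_int ((c j + d j) mod int (n+1)) / real (n+1)"
        by (rule frac_div_int) simp
      finally show ?thesis using True by (simp add: hK_def)
    qed (simp add: hK_def)
    then show "hK n (c \<otimes>\<^bsub>?P\<^esub> d) = hK n c \<otimes>\<^bsub>(torus n)\<lparr>carrier := K_set n\<rparr>\<^esub> hK n d"
      by (simp add: torus_mult fun_eq_iff)
  qed
  have inj: "inj_on (hK n) (carrier ?P)"
  proof (rule inj_onI)
    fix c d assume c: "c \<in> carrier ?P" and d: "d \<in> carrier ?P" and e: "hK n c = hK n d"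
    show "c = d"
    proof (rule PiE_ext)
      show "c \<in> (\<Pi>\<^sub>E i\<in>{..<n}. {0..<int (n+1)})" using c carP by simp
      show "d \<in> (\<Pi>\<^sub>E i\<in>{..<n}. {0..<int (n+1)})" using d carP by simp
      fix i assume i: "i \<in> {..<n}"
      have "hK n c i = hK n d i" using e by simp
      then show "c i = d i" using i by (simp add: hK_def)
    qed
  qed
  have onto: "K_set n \<subseteq> hK n ` carrier ?P"
  proof
    fix y assume y: "y \<in> K_set n"
    then have yc: "y \<in> carrier (torus n)" and yi: "\<And>j. j < n \<Longrightarrow> real (n+1) * y j \<in> \<int>"
      by (auto simp: K_iff)
    define c where "c = (\<lambda>j\<in>{..<n}. \<lfloor>real (n+1) * y j\<rfloor>)"
    have cj: "real_of_int (c j) = real (n+1) * y j" if "j < n" for j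
      using yi[OF that] that by (simp add: c_def)
    have "c \<in> carrier ?P"
    proof -
      have "0 \<le> c j \<and> c j < int (n+1)" if "j < n" for j
      proof -
        have "0 \<le> y j" "y j < 1" using yc that by (auto simp: torus_def)
        then have "0 \<le> real (n+1) * y j" "real (n+1) * y j < real (n+1)" by auto
        then show ?thesis using cj[OF that] by linarith
      qed
      then show ?thesis unfolding carP by (auto simp: c_def)
    qed
    moreover have "hK n c = y"
    proof
      fix j show "hK n c j = y j"
      proof (cases "j < n")
        case True then show ?thesis using cj[OF True] by (simp add: hK_def)
      next
        case False then show ?thesis using yc by (simp add: hK_def torus_def)
      qed
    qed
    ultimately show "y \<in> hK n ` carrier ?P" by blast
  qed
  have "hK n ` carrier ?P = K_set n" using onto mem by blast
  then show ?thesis using hom inj by (simp add: iso_def bij_betw_def)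
qed

lemma K_finite: "finite (K_set n)"
proof -
  let ?P = "product_group {..<n} (\<lambda>_. integer_mod_group (n+1))"
  have "hK n ` carrier ?P = K_set n"
    using K_iso[of n] by (simp add: iso_def bij_betw_def)
  moreover have "finite (carrier ?P)"
    by (simp add: carrier_integer_mod_group finite_PiE)
  ultimately show ?thesis by (metis finite_imageI)
qed

lemma K_iso2: "(torus n)\<lparr>carrier := K_set n\<rparr> \<cong> product_group {..<n} (\<lambda>_. integer_mod_group (n+1))"
proof -
  have g: "group (product_group {..<n} (\<lambda>_. integer_mod_group (n+1)))"
    by (rule product_group) simp
  show ?thesis by (rule group.iso_sym[OF g is_isoI[OF K_iso]])
qed

theorem mainTheorem3:
  fixes n :: nat
  assumes "n \<ge> 1"
  defines "T1 \<equiv> torus (n+1)" and "Tn \<equiv> torus n" and "K \<equiv> K_set n"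
  defines "A \<equiv> fT_Ds n ` carrier (torus n)" and "B \<equiv> fT_D n ` carrier (torus n)"
  shows "K = kernel Tn Tn (f_Ds n \<circ> fT_D n) \<and>
       (Tn\<lparr>carrier := K\<rparr> \<cong> product_group {..<n} (\<lambda>_. integer_mod_group (n+1))) \<and>
       (\<exists>\<phi>. \<phi> \<in> iso (T1\<lparr>carrier := A\<rparr> Mod D_D n) (T1 Mod N_D n)
              \<and> (\<forall>a\<in>A. \<phi> (D_D n #>\<^bsub>T1\<^esub> a) = N_D n #>\<^bsub>T1\<^esub> a)) \<and>
       (\<exists>\<psi>. \<psi> \<in> iso (Tn Mod K) (T1\<lparr>carrier := A\<rparr> Mod D_D n)
              \<and> (\<forall>x\<in>carrier Tn. \<psi> (K #>\<^bsub>Tn\<^esub> x) = D_D n #>\<^bsub>T1\<^esub> fT_Ds n x)) \<and>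
       (\<exists>\<phi>. \<phi> \<in> iso (T1\<lparr>carrier := B\<rparr> Mod D_Ds n) (T1 Mod N_Ds n)
              \<and> (\<forall>a\<in>B. \<phi> (D_Ds n #>\<^bsub>T1\<^esub> a) = N_Ds n #>\<^bsub>T1\<^esub> a)) \<and>
       (\<exists>\<psi>. \<psi> \<in> iso (Tn Mod K) (T1\<lparr>carrier := B\<rparr> Mod D_Ds n)
              \<and> (\<forall>x\<in>carrier Tn. \<psi> (K #>\<^bsub>Tn\<^esub> x) = D_Ds n #>\<^bsub>T1\<^esub> fT_D n x)) \<and>
       finite (D_D n) \<and> finite (D_Ds n)"
proof -
  have K1: "K = kernel Tn Tn (f_D n \<circ> fT_Ds n)" by (simp add: K_def K_set_def Tn_def)
  have K2: "K = kernel Tn Tn (f_Ds n \<circ> fT_D n)" by (simp add: K1 comp1 comp2)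
  have s1: "(f_D n \<circ> fT_Ds n) ` carrier Tn = carrier Tn" by (simp add: comp1 mulN_surj Tn_def)
  have s2: "(f_Ds n \<circ> fT_D n) ` carrier Tn = carrier Tn" by (simp add: comp2 mulN_surj Tn_def)
  note R1 = abstract_part[OF torus_comm_group torus_comm_group f_D_hom fT_Ds_hom s1[unfolded Tn_def], folded T1_def Tn_def]
  note R2 = abstract_part[OF torus_comm_group torus_comm_group f_Ds_hom fT_D_hom s2[unfolded Tn_def], folded T1_def Tn_def]
  have eqD1: "D_D n = kernel T1 Tn (f_D n) \<inter> A" by (simp add: D_D_def N_D_def T1_def Tn_def A_def)
  have eqD2: "D_Ds n = kernel T1 Tn (f_Ds n) \<inter> B" by (simp add: D_Ds_def N_Ds_def T1_def Tn_def B_def)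
  have eqN1: "N_D n = kernel T1 Tn (f_D n)" by (simp add: N_D_def T1_def Tn_def)
  have eqN2: "N_Ds n = kernel T1 Tn (f_Ds n)" by (simp add: N_Ds_def T1_def Tn_def)
  have A': "A = fT_Ds n ` carrier Tn" by (simp add: A_def Tn_def)
  have B': "B = fT_D n ` carrier Tn" by (simp add: B_def Tn_def)
  have fin: "finite K" unfolding K_def by (rule K_finite)
  have F1: "finite (D_D n)"
    using R1 fin finite_subset[of "D_D n" "fT_Ds n ` K"] unfolding eqD1 A' K1[symmetric] by blast
  have F2: "finite (D_Ds n)"
    using R2 fin finite_subset[of "D_Ds n" "fT_D n ` K"] unfolding eqD2 B' K2[symmetric] by blast
  have I: "Tn\<lparr>carrier := K\<rparr> \<cong> product_group {..<n} (\<lambda>_. integer_mod_group (n+1))"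
    unfolding Tn_def K_def by (rule K_iso2)
  show ?thesis
    using R1 R2 F1 F2 I K2 unfolding eqD1 eqD2 eqN1 eqN2 A' B' K1[symmetric] K2[symmetric]
    by blast
qed

end
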